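(* Let $a:\mathbb R^d\to\mathcal S_d^+$ be continuous with $\|a(x)\|\le\Lambda$ and $\operatorname{Tr}a(x)\ge\lambda$ for all $x$, and assume the martingale problem for $L$ is well-posed, with solutions $(\mathbb P^x)_{x\in\mathbb R^d}$. Let $(x_n)_{n\ge1}$ be a dense sequence in $\mathbb R^d$ and define the measure $\mathfrak m(B):=\sum_{n\ge1}2^{-n}R_1\mathbf 1_B(x_n)$ for Borel $B\subset\mathbb R^d$. If $B$ is a Borel set with $\mathfrak m(B)=0$, then $\mathbb R^d\setminus B$ is dense in $\mathbb R^d$.
   Context: Fix $d\ge1$, $\alpha\in(0,2)$, $\lambda,\Lambda>0$. $\mathcal S_d^+$: symmetric non-negative definite real $d\times d$ matrices, $\|a\|=\sum|a_{ij}|$. $Lu(x)=\frac12\int_{\mathbb R^d}[u(x+z)+u(x-z)-2u(x)]\frac{\langle a(x)z,z\rangle}{|z|^{d+\alpha+2}}dz$ on $C_c^2(\mathbb R^d)$. $\mathcal D$: Skorokhod space of càdlàg paths, $X_t$ canonical process, $\mathcal F_t=\sigma(X_s,s\le t)$. Well-posedness: for every Borel probability $\nu$ on $\mathbb R^d$ a unique probability on $\mathcal D$ with $X_0\sim\nu$ and $f(X_t)-f(X_0)-\int_0^tLf(X_r)dr$ an $(\mathcal F_t)$-martingale for all $f\in C_c^\infty$; $\mathbb P^x$ the solution with $\nu=\delta_x$. $R_1f(x)=\mathbb E^x\int_0^\infty e^{-t}f(X_t)\,dt$ for bounded Borel $f$. *)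

theory Defs
  imports "HOL-Analysis.Analysis" "HOL-Probability.Probability"
begin

coinductive smooth_fun :: "(real^'n \<Rightarrow> real) \<Rightarrow> bool" where
  "(\<forall>x. g differentiable (at x)) \<Longrightarrow>
   (\<forall>i. smooth_fun (\<lambda>x. frechet_derivative g (at x) (axis i 1))) \<Longrightarrow> smooth_fun g"

definition Cc_inf :: "(real^'n \<Rightarrow> real) set" where
  "Cc_inf = {f. smooth_fun f \<and> compact (closure {x. f x \<noteq> 0})}"

definition Lop :: "real \<Rightarrow> (real^'n \<Rightarrow> real^'n^'n) \<Rightarrow> (real^'n \<Rightarrow> real) \<Rightarrow> real^'n \<Rightarrow> real" where
  "Lop \<alpha> a f x = 1/2 * (\<integral>z. (f (x + z) + f (x - z) - 2 * f x) *
       ((a x *v z) \<bullet> z) / norm z powr (real CARD('n) + \<alpha> + 2) \<partial>lborel)"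

text \<open>Paths are functions on the reals; only times t >= 0 matter, and we normalise
by the constant extension omega t = omega 0 for t < 0.\<close>
definition cadlag_paths :: "(real \<Rightarrow> real^'n) set" where
  "cadlag_paths = {\<omega>. (\<forall>t<0. \<omega> t = \<omega> 0) \<and>
      (\<forall>t\<ge>0. continuous (at_right t) \<omega> \<and> (0 < t \<longrightarrow> (\<exists>l. (\<omega> \<longlongrightarrow> l) (at_left t))))}"

definition filt :: "real \<Rightarrow> (real \<Rightarrow> real^'n) measure" where
  "filt s = sigma cadlag_paths
     {(\<lambda>\<omega>. \<omega> r) -` A \<inter> cadlag_paths | r A. 0 \<le> r \<and> r \<le> s \<and> A \<in> sets borel}"

definition Dmeas :: "(real \<Rightarrow> real^'n) measure" where
  "Dmeas = sigma cadlag_paths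
     {(\<lambda>\<omega>. \<omega> r) -` A \<inter> cadlag_paths | r A. 0 \<le> r \<and> A \<in> sets borel}"

definition is_martingale ::
  "'a measure \<Rightarrow> (real \<Rightarrow> 'a measure) \<Rightarrow> (real \<Rightarrow> 'a \<Rightarrow> real) \<Rightarrow> bool" where
  "is_martingale P F M \<longleftrightarrow>
     (\<forall>t\<ge>0. integrable P (M t) \<and> M t \<in> borel_measurable (F t)) \<and>
     (\<forall>s t A. 0 \<le> s \<longrightarrow> s \<le> t \<longrightarrow> A \<in> sets (F s) \<longrightarrow>
        (\<integral>\<omega>\<in>A. M t \<omega> \<partial>P) = (\<integral>\<omega>\<in>A. M s \<omega> \<partial>P))"

definition solves_MP ::
  "real \<Rightarrow> (real^'n \<Rightarrow> real^'n^'n) \<Rightarrow> (real^'n) measure \<Rightarrow> (real \<Rightarrow> real^'n) measure \<Rightarrow> bool" where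
  "solves_MP \<alpha> a \<nu> P \<longleftrightarrow>
     sets P = sets Dmeas \<and> space P = space Dmeas \<and> prob_space P \<and>
     distr P borel (\<lambda>\<omega>. \<omega> 0) = \<nu> \<and>
     (\<forall>f\<in>Cc_inf. is_martingale P filt
        (\<lambda>t \<omega>. f (\<omega> t) - f (\<omega> 0) - (\<integral>r\<in>{0..t}. Lop \<alpha> a f (\<omega> r) \<partial>lborel)))"

definition MP_well_posed :: "real \<Rightarrow> (real^'n \<Rightarrow> real^'n^'n) \<Rightarrow> bool" where
  "MP_well_posed \<alpha> a \<longleftrightarrow>
     (\<forall>\<nu>::(real^'n) measure. prob_space \<nu> \<and> sets \<nu> = sets borel \<longrightarrow>
        (\<exists>!P. solves_MP \<alpha> a \<nu> P))"

definition R1 :: "(real^'n \<Rightarrow> (real \<Rightarrow> real^'n) measure) \<Rightarrow> (real^'n \<Rightarrow> real) \<Rightarrow> real^'n \<Rightarrow> real" where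
  "R1 Px f x = (\<integral>\<omega>. (\<integral>t\<in>{0..}. exp (- t) * f (\<omega> t) \<partial>lborel) \<partial>Px x)"

definition mat_norm1 :: "real^'n^'n \<Rightarrow> real" where
  "mat_norm1 A = (\<Sum>i\<in>UNIV. \<Sum>j\<in>UNIV. \<bar>A $ i $ j\<bar>)"

definition mat_trace :: "real^'n^'n \<Rightarrow> real" where
  "mat_trace A = (\<Sum>i\<in>UNIV. A $ i $ i)"

end

theory Submission
  imports Defs "HOL-Probability.Sinc_Integral"
begin

lemma space_Dmeas: "space (Dmeas :: (real \<Rightarrow> real^'n) measure) = cadlag_paths"
  unfolding Dmeas_def by (rule space_measure_of) auto

lemma sets_Dmeas: "sets (Dmeas :: (real \<Rightarrow> real^'n) measure) = sigma_sets cadlag_paths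
     {(\<lambda>\<omega>. \<omega> r) -` A \<inter> cadlag_paths | r A. 0 \<le> r \<and> A \<in> sets borel}"
  unfolding Dmeas_def by (rule sets_measure_of) auto

lemma eval_meas: "0 \<le> r \<Longrightarrow> (\<lambda>\<omega>. \<omega> r) \<in> borel_measurable (Dmeas :: (real \<Rightarrow> real^'n) measure)"
proof (rule measurableI)
  fix A :: "(real^'n) set" assume "0 \<le> r" "A \<in> sets borel"
  then show "(\<lambda>\<omega>. \<omega> r) -` A \<inter> space Dmeas \<in> sets (Dmeas :: (real \<Rightarrow> real^'n) measure)"
    unfolding space_Dmeas sets_Dmeas by (intro sigma_sets.Basic) blast
qed auto

lemma approx_lim:
  fixes \<omega> :: "real \<Rightarrow> real^'n"
  assumes "\<omega> \<in> cadlag_paths"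
  shows "(\<lambda>k::nat. \<omega> (real (nat \<lceil>2^k * t\<rceil>) / 2^k)) \<longlonglongrightarrow> \<omega> t"
proof (cases "t \<le> 0")
  case True
  have "nat \<lceil>2^k * t\<rceil> = 0" for k::nat
    using True by (simp add: mult_nonneg_nonpos)
  moreover have "\<omega> t = \<omega> 0" using assms True unfolding cadlag_paths_def
    by (cases "t = 0") auto
  ultimately show ?thesis by simp
next
  case False
  then have t: "t > 0" by simp
  define q where "q k = real (nat \<lceil>2^k * t\<rceil>) / 2^k" for k :: nat
  have q: "q k = real_of_int \<lceil>2^k * t\<rceil> / 2^k" for k
    using t unfolding q_def by (simp add: zero_less_mult_iff)
  have lo: "t \<le> q k" for k
  proof -
    have "2^k * t \<le> real_of_int \<lceil>2^k * t\<rceil>" by (rule le_of_int_ceiling)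
    then show ?thesis unfolding q by (simp add: field_simps)
  qed
  have hi: "q k \<le> t + (1/2)^k" for k
  proof -
    have "real_of_int \<lceil>2^k * t\<rceil> \<le> 2^k * t + 1" using ceiling_correct[of "2^k*t"] by linarith
    then show ?thesis unfolding q by (simp add: field_simps power_divide)
  qed
  have "(\<lambda>k. t + (1/2::real)^k) \<longlonglongrightarrow> t + 0"
    by (intro tendsto_intros) simp
  then have qlim: "q \<longlonglongrightarrow> t"
    using lo hi by (intro tendsto_sandwich[of "\<lambda>_. t" q _ "\<lambda>k. t + (1/2)^k"]) auto
  have "continuous (at_right t) \<omega>" using assms t unfolding cadlag_paths_def by auto
  then have "continuous (at t within {t..}) \<omega>"
  proof -
    have "{t..} - {t} = {t<..} - {t}" by auto
    then have "at t within {t..} = at_right t" unfolding at_within_def by simp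
    then show ?thesis using \<open>continuous (at_right t) \<omega>\<close> by simp
  qed
  then have "(\<omega> \<circ> q) \<longlonglongrightarrow> \<omega> t"
    unfolding continuous_within_sequentially using lo qlim by auto
  then show ?thesis unfolding q_def comp_def .
qed

lemma joint_meas:
  "(\<lambda>p::(real \<Rightarrow> real^'n) \<times> real. fst p (snd p)) \<in> borel_measurable (Dmeas \<Otimes>\<^sub>M lborel)"
proof (rule borel_measurable_LIMSEQ_metric[where f="\<lambda>k p. fst p (real (nat \<lceil>2^k * snd p\<rceil>) / 2^k)"])
  fix k :: nat
  show "(\<lambda>p::(real \<Rightarrow> real^'n) \<times> real. fst p (real (nat \<lceil>2^k * snd p\<rceil>) / 2^k)) \<in> borel_measurable (Dmeas \<Otimes>\<^sub>M lborel)"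
  proof (rule measurable_compose_countable'[where f="\<lambda>i p. fst p (real i / 2^k)" and g="\<lambda>p. nat \<lceil>2^k * snd p\<rceil>" and I=UNIV])
    fix i :: nat
    show "(\<lambda>p::(real \<Rightarrow> real^'n) \<times> real. fst p (real i / 2^k)) \<in> borel_measurable (Dmeas \<Otimes>\<^sub>M lborel)"
      by (rule measurable_compose[OF measurable_fst eval_meas]) simp
  next
    show "(\<lambda>p::(real \<Rightarrow> real^'n) \<times> real. nat \<lceil>2^k * snd p\<rceil>) \<in> measurable (Dmeas \<Otimes>\<^sub>M lborel) (count_space UNIV)"
      by measurable
  qed simp
next
  fix p :: "(real \<Rightarrow> real^'n) \<times> real"
  assume "p \<in> space (Dmeas \<Otimes>\<^sub>M lborel)"
  then have "fst p \<in> cadlag_paths" by (auto simp: space_pair_measure space_Dmeas)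
  then show "(\<lambda>k. fst p (real (nat \<lceil>2^k * snd p\<rceil>) / 2^k)) \<longlonglongrightarrow> fst p (snd p)"
    by (rule approx_lim)
qed

lemma h_meas:
  assumes B: "B \<in> sets borel"
  shows "(\<lambda>p::(real \<Rightarrow> real^'n) \<times> real. indicator {0..} (snd p) * (exp (- snd p) * indicator B (fst p (snd p))) :: real)
     \<in> borel_measurable (Dmeas \<Otimes>\<^sub>M lborel)"
proof -
  have "(\<lambda>p::(real \<Rightarrow> real^'n) \<times> real. indicator B (fst p (snd p)) :: real) \<in> borel_measurable (Dmeas \<Otimes>\<^sub>M lborel)"
    using measurable_compose[OF joint_meas borel_measurable_indicator[OF B]] by simp
  then show ?thesis by measurable
qed

lemma exp_int: "has_bochner_integral lborel (\<lambda>t::real. indicator {0..} t * exp (- t)) (1::real)"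
  using has_bochner_integral_I0i_power_exp_m'[of 0] by (simp add: mult.commute)

lemma F_bounds:
  fixes \<omega> :: "real \<Rightarrow> real^'n"
  shows "0 \<le> integral\<^sup>L lborel (\<lambda>t. indicator {0..} t * (exp (- t) * indicator B (\<omega> t)) :: real)"
    and "integral\<^sup>L lborel (\<lambda>t. indicator {0..} t * (exp (- t) * indicator B (\<omega> t)) :: real) \<le> 1"
proof -
  show "0 \<le> integral\<^sup>L lborel (\<lambda>t. indicator {0..} t * (exp (- t) * indicator B (\<omega> t)) :: real)"
    by (intro integral_nonneg_AE AE_I2) (auto simp: indicator_def)
  show "integral\<^sup>L lborel (\<lambda>t. indicator {0..} t * (exp (- t) * indicator B (\<omega> t)) :: real) \<le> 1"
  proof (cases "integrable lborel (\<lambda>t. indicator {0..} t * (exp (- t) * indicator B (\<omega> t)) :: real)")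
    case True
    have "integral\<^sup>L lborel (\<lambda>t. indicator {0..} t * (exp (- t) * indicator B (\<omega> t)) :: real)
       \<le> integral\<^sup>L lborel (\<lambda>t::real. indicator {0..} t * exp (- t))"
      using True integrable.intros[OF exp_int] by (intro integral_mono) (auto simp: indicator_def)
    also have "\<dots> = 1" using exp_int by (simp add: has_bochner_integral_integral_eq)
    finally show ?thesis .
  next
    case False
    then show ?thesis by (simp add: not_integrable_integral_eq)
  qed
qed

lemma F_pos:
  fixes \<omega> :: "real \<Rightarrow> real^'n"
  assumes B: "B \<in> sets borel" and w: "\<omega> \<in> cadlag_paths" and d: "0 < \<delta>" "ball (\<omega> 0) \<delta> \<subseteq> B"
  shows "0 < integral\<^sup>L lborel (\<lambda>t. indicator {0..} t * (exp (- t) * indicator B (\<omega> t)) :: real)"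
proof -
  let ?h = "\<lambda>t. indicator {0..} t * (exp (- t) * indicator B (\<omega> t)) :: real"
  have "continuous (at_right 0) \<omega>" using w unfolding cadlag_paths_def by auto
  then have "(\<omega> \<longlongrightarrow> \<omega> 0) (at_right 0)" by (simp add: continuous_within)
  then have "eventually (\<lambda>s. \<omega> s \<in> ball (\<omega> 0) \<delta>) (at_right (0::real))"
    using d(1) by (intro topological_tendstoD) auto
  then obtain b :: real where b: "b > 0" "\<And>s. 0 < s \<Longrightarrow> s < b \<Longrightarrow> \<omega> s \<in> ball (\<omega> 0) \<delta>"
    unfolding eventually_at_right[OF zero_less_one] by blast
  have hm: "?h \<in> borel_measurable lborel"
    using measurable_Pair2[OF h_meas[OF B], of \<omega>] w by (simp add: space_Dmeas)
  have int: "integrable lborel ?h"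
    by (rule Bochner_Integration.integrable_bound[OF integrable.intros[OF exp_int] hm])
       (auto simp: indicator_def)
  have int2: "integrable lborel (\<lambda>t::real. indicator {0<..<b} t * exp (- b))"
    using b by (intro integrable_mult_left integrable_real_indicator) (auto simp: emeasure_lborel_Ioo)
  have "integral\<^sup>L lborel (\<lambda>t::real. indicator {0<..<b} t * exp (- b)) \<le> integral\<^sup>L lborel ?h"
  proof (rule integral_mono[OF int2 int])
    fix t :: real
    show "indicator {0<..<b} t * exp (- b) \<le> ?h t"
    proof (cases "0 < t \<and> t < b")
      case True
      then have "\<omega> t \<in> B" using b d by blast
      then show ?thesis using True by (simp add: indicator_def)
    next
      case False
      then show ?thesis by (auto simp: indicator_def)
    qed
  qed
  moreover have "integral\<^sup>L lborel (\<lambda>t::real. indicator {0<..<b} t * exp (- b)) = b * exp (- b)"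
    using b by simp
  moreover have "0 < b * exp (- b)" using b by simp
  ultimately show ?thesis by linarith
qed

theorem propositionB1:
  fixes a :: "real^'n \<Rightarrow> real^'n^'n"
    and \<alpha> lam Lam :: real
    and Px :: "real^'n \<Rightarrow> (real \<Rightarrow> real^'n) measure"
    and xs :: "nat \<Rightarrow> real^'n"
    and B :: "(real^'n) set"
  assumes "0 < \<alpha>" "\<alpha> < 2" "0 < lam" "0 < Lam"
    and "continuous_on UNIV a"
    and "\<And>x. transpose (a x) = a x"
    and "\<And>x v. 0 \<le> v \<bullet> (a x *v v)"
    and "\<And>x. mat_norm1 (a x) \<le> Lam"
    and "\<And>x. mat_trace (a x) \<ge> lam"
    and "MP_well_posed \<alpha> a"
    and "\<And>x. solves_MP \<alpha> a (return borel x) (Px x)"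
    and "closure (range xs) = UNIV"
    and "B \<in> sets borel"
    and "(\<Sum>n. (1/2) ^ Suc n * R1 Px (indicator B) (xs n)) = 0"
  shows "closure (UNIV - B) = UNIV"
proof (rule ccontr)
  assume nc: "closure (UNIV - B) \<noteq> UNIV"
  note B = assms(13)
  define F where "F \<omega> = integral\<^sup>L lborel (\<lambda>t. indicator {0..} t * (exp (- t) * indicator B (\<omega> t)) :: real)"
    for \<omega> :: "real \<Rightarrow> real^'n"
  have R1F: "R1 Px (indicator B) x = integral\<^sup>L (Px x) F" for x
    unfolding R1_def F_def set_lebesgue_integral_def by simp
  have Fmeas: "F \<in> borel_measurable (Dmeas :: (real \<Rightarrow> real^'n) measure)"
    unfolding F_def using h_meas[OF B]
    by (intro lborel.borel_measurable_lebesgue_integral) (simp add: case_prod_beta)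
  have sol: "sets (Px x) = sets Dmeas" "space (Px x) = cadlag_paths" "prob_space (Px x)"
    "distr (Px x) borel (\<lambda>\<omega>. \<omega> 0) = return borel x" for x
    using assms(11)[of x] unfolding solves_MP_def by (auto simp: space_Dmeas)
  have FmeasP: "F \<in> borel_measurable (Px x)" for x
    unfolding measurable_cong_sets[OF sol(1)[of x] refl] by (rule Fmeas)
  have Fint: "integrable (Px x) F" for x
  proof -
    interpret prob_space "Px x" by (rule sol(3))
    show ?thesis
      by (rule integrable_const_bound[where B=1]) (auto simp: F_def F_bounds FmeasP abs_le_iff intro: order_trans[OF _ F_bounds(1)])
  qed
  have R1nn: "0 \<le> R1 Px (indicator B) x" for x
    unfolding R1F by (intro integral_nonneg_AE AE_I2) (simp add: F_def F_bounds)
  have R1le: "R1 Px (indicator B) x \<le> 1" for x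
  proof -
    interpret prob_space "Px x" by (rule sol(3))
    have "integral\<^sup>L (Px x) F \<le> integral\<^sup>L (Px x) (\<lambda>_. 1)"
      by (intro integral_mono Fint) (auto simp: F_def F_bounds)
    then show ?thesis unfolding R1F by (simp add: prob_space)
  qed
  have summ: "summable (\<lambda>n. (1/2::real) ^ Suc n * R1 Px (indicator B) (xs n))"
  proof (rule summable_comparison_test[where g="\<lambda>n. (1/2::real) ^ Suc n"])
    show "\<exists>N. \<forall>n\<ge>N. norm ((1/2::real) ^ Suc n * R1 Px (indicator B) (xs n)) \<le> (1/2) ^ Suc n"
      using R1nn R1le by (auto intro!: mult_left_le_one_le simp: abs_mult)
    show "summable (\<lambda>n. (1/2::real) ^ Suc n)"
      using summable_geometric[of "1/2::real"] summable_Suc_iff[of "\<lambda>n. (1/2::real) ^ n"] by simp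
  qed
  have zero: "R1 Px (indicator B) (xs n) = 0" for n
    using assms(14) summ R1nn suminf_eq_zero_iff[OF summ] by simp
  have "interior B \<noteq> {}"
    using nc closure_complement[of B] by (auto simp: Compl_eq_Diff_UNIV[symmetric])
  moreover have "interior B \<inter> closure (range xs) = interior B" using assms(12) by simp
  ultimately have "interior B \<inter> range xs \<noteq> {}"
    using open_Int_closure_eq_empty[of "interior B" "range xs"] by auto
  then obtain n where n: "xs n \<in> interior B" by auto
  then obtain \<delta> where d: "0 < \<delta>" "ball (xs n) \<delta> \<subseteq> B"
    using open_contains_ball interior_subset open_interior by (metis subset_trans)
  let ?x = "xs n"
  interpret P: prob_space "Px ?x" by (rule sol(3))
  have m0: "(\<lambda>\<omega>. \<omega> 0) \<in> measurable (Px ?x) (borel :: (real^'n) measure)"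
    unfolding measurable_cong_sets[OF sol(1)[of ?x] refl] by (rule eval_meas) simp
  have "AE y in distr (Px ?x) borel (\<lambda>\<omega>. \<omega> 0). y = ?x"
    unfolding sol(4) by (subst AE_return) auto
  then have AE0: "AE \<omega> in Px ?x. \<omega> 0 = ?x" by (rule AE_distrD[OF m0])
  have AEpos: "AE \<omega> in Px ?x. 0 < F \<omega>"
    using AE0
  proof (rule AE_mp)
    show "AE \<omega> in Px ?x. \<omega> 0 = ?x \<longrightarrow> 0 < F \<omega>"
    proof (rule AE_I2, rule impI)
      fix \<omega> assume "\<omega> \<in> space (Px ?x)" "\<omega> 0 = ?x"
      then show "0 < F \<omega>" unfolding F_def using F_pos[OF B _ d(1)] d(2) sol(2) by auto
    qed
  qed
  have "integral\<^sup>L (Px ?x) F \<noteq> 0"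
  proof
    assume "integral\<^sup>L (Px ?x) F = 0"
    then have "AE \<omega> in Px ?x. F \<omega> = 0"
      using integral_nonneg_eq_0_iff_AE[OF Fint] by (simp add: F_def F_bounds)
    with AEpos have "AE \<omega> in Px ?x. False" by eventually_elim simp
    then show False by (simp add: P.AE_False)
  qed
  then show False using zero[of n] R1F by simp
qed

end
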